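(* Let $A$ be a unital C*-algebra with unit $1_A$, let $P$ be a (right-reversible) Ore semigroup with identity $e$ and enveloping group $G = P^{-1}P$, and let $\alpha: P \to \mathrm{End}(A)$ be an action of $P$ on $A$ by injective unital-or-not endomorphisms $\alpha_p$, $p\in P$, with $\alpha_e=\mathrm{id}$. Let $(B, G, \beta)$ together with the injective $*$-homomorphism $\iota: A \to B$ be the minimal automorphic dilation of $(A,P,\alpha)$, i.e. $\beta$ is an action of $G$ on the C*-algebra $B$ by automorphisms with $\beta_p\circ\iota = \iota\circ\alpha_p$ for all $p\in P$ and $\bigcup_{p\in P}\beta_p^{-1}(\iota(A))$ dense in $B$. Let $u_g$, $g\in G$, be the unitaries in the multiplier algebra of the crossed product $B\rtimes_\beta G$ implementing $\beta$ (so $u_g b u_g^* = \beta_g(b)$). Then the net $(u_p^*\,\iota(1_A)\,u_p)_{p\in P}$, indexed by $P$ directed by the preorder $p\le r \iff r\in Pp$, is an approximate unit for $B$.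
   Context: A (right-reversible) Ore semigroup is a cancellative semigroup $P$ with $Ps\cap Pt\neq\emptyset$ for all $s,t\in P$; such $P$ embeds in a group $G$ with $G=P^{-1}P$ (the enveloping group, unique up to isomorphism). The preorder $p\le r$ iff $r\in Pp$ makes $P$ a directed set. For such a system with injective endomorphisms, a minimal automorphic dilation $(B,G,\beta,\iota)$ as described exists and is unique up to isomorphism (Laca). Note $u_p^*\iota(1_A)u_p=\beta_p^{-1}(\iota(1_A))\in B$. *)

theory Defs
  imports "HOL-Analysis.Analysis" "HOL-Algebra.Group"
begin

definition cstar_algebra ::
  "(complex \<Rightarrow> 'a::{real_normed_algebra,banach} \<Rightarrow> 'a) \<Rightarrow> ('a \<Rightarrow> 'a) \<Rightarrow> bool" where
  "cstar_algebra sc st \<longleftrightarrow>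
     (\<forall>r x. sc (complex_of_real r) x = scaleR r x) \<and>
     (\<forall>c d x. sc (c + d) x = sc c x + sc d x) \<and>
     (\<forall>c x y. sc c (x + y) = sc c x + sc c y) \<and>
     (\<forall>c d x. sc c (sc d x) = sc (c * d) x) \<and>
     (\<forall>c x y. sc c (x * y) = sc c x * y \<and> sc c (x * y) = x * sc c y) \<and>
     (\<forall>c x. norm (sc c x) = cmod c * norm x) \<and>
     (\<forall>x. st (st x) = x) \<and>
     (\<forall>x y. st (x + y) = st x + st y) \<and>
     (\<forall>c x. st (sc c x) = sc (cnj c) (st x)) \<and>
     (\<forall>x y. st (x * y) = st y * st x) \<and>
     (\<forall>x. norm (st x * x) = norm x ^ 2)"

definition star_hom ::
  "(complex \<Rightarrow> 'a::{real_normed_algebra,banach} \<Rightarrow> 'a) \<Rightarrow> ('a \<Rightarrow> 'a) \<Rightarrow>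
   (complex \<Rightarrow> 'b::{real_normed_algebra,banach} \<Rightarrow> 'b) \<Rightarrow> ('b \<Rightarrow> 'b) \<Rightarrow> ('a \<Rightarrow> 'b) \<Rightarrow> bool" where
  "star_hom sc st sc' st' f \<longleftrightarrow>
     (\<forall>x y. f (x + y) = f x + f y) \<and>
     (\<forall>c x. f (sc c x) = sc' c (f x)) \<and>
     (\<forall>x y. f (x * y) = f x * f y) \<and>
     (\<forall>x. f (st x) = st' (f x))"

definition star_aut ::
  "(complex \<Rightarrow> 'a::{real_normed_algebra,banach} \<Rightarrow> 'a) \<Rightarrow> ('a \<Rightarrow> 'a) \<Rightarrow> ('a \<Rightarrow> 'a) \<Rightarrow> bool" where
  "star_aut sc st f \<longleftrightarrow> star_hom sc st sc st f \<and> bij f"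

definition ore_enveloping :: "('g, 'z) monoid_scheme \<Rightarrow> 'g set \<Rightarrow> bool" where
  "ore_enveloping G P \<longleftrightarrow>
     group G \<and> P \<subseteq> carrier G \<and> \<one>\<^bsub>G\<^esub> \<in> P \<and>
     (\<forall>p\<in>P. \<forall>q\<in>P. p \<otimes>\<^bsub>G\<^esub> q \<in> P) \<and>
     (\<forall>s\<in>P. \<forall>t\<in>P. \<exists>p\<in>P. \<exists>q\<in>P. p \<otimes>\<^bsub>G\<^esub> s = q \<otimes>\<^bsub>G\<^esub> t) \<and>
     carrier G = {inv\<^bsub>G\<^esub> p \<otimes>\<^bsub>G\<^esub> q | p q. p \<in> P \<and> q \<in> P}"

text \<open>The filter of tails of the directed set (P, \<le>) with p \<le> r iff r \<in> P p.\<close>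
definition ore_net :: "('g, 'z) monoid_scheme \<Rightarrow> 'g set \<Rightarrow> 'g filter" where
  "ore_net G P = (INF p\<in>P. principal {r \<in> P. \<exists>s\<in>P. r = s \<otimes>\<^bsub>G\<^esub> p})"

definition approximate_unit ::
  "('b::{real_normed_algebra,banach} \<Rightarrow> 'b) \<Rightarrow> 'i set \<Rightarrow> 'i filter \<Rightarrow> ('i \<Rightarrow> 'b) \<Rightarrow> bool" where
  "approximate_unit st I F e \<longleftrightarrow>
     (\<forall>i\<in>I. (\<exists>y. e i = st y * y) \<and> norm (e i) \<le> 1) \<and>
     (\<forall>b. ((\<lambda>i. e i * b) \<longlongrightarrow> b) F \<and> ((\<lambda>i. b * e i) \<longlongrightarrow> b) F)"

end

theory Submission
  imports Defs
begin

lemma approx_left: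
  fixes e :: "'i \<Rightarrow> 'b::real_normed_algebra"
  assumes n: "\<forall>i\<in>I. norm (e i) \<le> 1" and ev: "eventually (\<lambda>i. i \<in> I) F"
    and cl: "closure S = UNIV" and fx: "\<forall>x\<in>S. eventually (\<lambda>i. e i * x = x) F"
  shows "((\<lambda>i. e i * b) \<longlongrightarrow> b) F"
proof (rule tendstoI)
  fix \<epsilon> :: real assume ep: "\<epsilon> > 0"
  have "b \<in> closure S" using cl by simp
  then obtain x where xS: "x \<in> S" and dx: "dist x b < \<epsilon>/2"
    using closure_approachable[of b S] ep by (meson half_gt_zero)
  have "eventually (\<lambda>i. i \<in> I \<and> e i * x = x) F"
    using ev fx xS eventually_conj by blast
  then show "eventually (\<lambda>i. dist (e i * b) b < \<epsilon>) F"
  proof (rule eventually_mono)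
    fix i assume h: "i \<in> I \<and> e i * x = x"
    have eq: "e i * b - b = e i * (b - x) + (x - b)" using h by (simp add: algebra_simps)
    have "norm (e i * (b - x)) \<le> norm (e i) * norm (b - x)" by (rule norm_mult_ineq)
    also have "\<dots> \<le> norm (b - x)" using n h by (simp add: mult_left_le_one_le)
    finally have "norm (e i * b - b) \<le> norm (b - x) + norm (x - b)"
      unfolding eq by (meson norm_triangle_le add_right_mono)
    moreover have "norm (b - x) < \<epsilon>/2" "norm (x - b) < \<epsilon>/2" using dx
      by (simp_all add: dist_norm norm_minus_commute)
    ultimately show "dist (e i * b) b < \<epsilon>" by (simp add: dist_norm)
  qed
qed

lemma approx_right:
  fixes e :: "'i \<Rightarrow> 'b::real_normed_algebra"
  assumes n: "\<forall>i\<in>I. norm (e i) \<le> 1" and ev: "eventually (\<lambda>i. i \<in> I) F"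
    and cl: "closure S = UNIV" and fx: "\<forall>x\<in>S. eventually (\<lambda>i. x * e i = x) F"
  shows "((\<lambda>i. b * e i) \<longlongrightarrow> b) F"
proof (rule tendstoI)
  fix \<epsilon> :: real assume ep: "\<epsilon> > 0"
  have "b \<in> closure S" using cl by simp
  then obtain x where xS: "x \<in> S" and dx: "dist x b < \<epsilon>/2"
    using closure_approachable[of b S] ep by (meson half_gt_zero)
  have "eventually (\<lambda>i. i \<in> I \<and> x * e i = x) F"
    using ev fx xS eventually_conj by blast
  then show "eventually (\<lambda>i. dist (b * e i) b < \<epsilon>) F"
  proof (rule eventually_mono)
    fix i assume h: "i \<in> I \<and> x * e i = x"
    have eq: "b * e i - b = (b - x) * e i + (x - b)" using h by (simp add: algebra_simps)
    have "norm ((b - x) * e i) \<le> norm (b - x) * norm (e i)" by (rule norm_mult_ineq)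
    also have "\<dots> \<le> norm (b - x)" using n h by (simp add: mult_right_le_one_le)
    finally have "norm (b * e i - b) \<le> norm (b - x) + norm (x - b)"
      unfolding eq by (meson norm_triangle_le add_right_mono)
    moreover have "norm (b - x) < \<epsilon>/2" "norm (x - b) < \<epsilon>/2" using dx
      by (simp_all add: dist_norm norm_minus_commute)
    ultimately show "dist (b * e i) b < \<epsilon>" by (simp add: dist_norm)
  qed
qed


theorem lemma1p2:
  fixes G :: "('g, 'z) monoid_scheme" and P :: "'g set"
    and scA :: "complex \<Rightarrow> 'a::{real_normed_algebra,banach} \<Rightarrow> 'a" and stA :: "'a \<Rightarrow> 'a"
    and oneA :: 'a
    and scB :: "complex \<Rightarrow> 'b::{real_normed_algebra,banach} \<Rightarrow> 'b" and stB :: "'b \<Rightarrow> 'b"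
    and scM :: "complex \<Rightarrow> 'm::{real_normed_algebra,banach} \<Rightarrow> 'm" and stM :: "'m \<Rightarrow> 'm"
    and oneM :: 'm
    and \<alpha> :: "'g \<Rightarrow> 'a \<Rightarrow> 'a" and \<beta> :: "'g \<Rightarrow> 'b \<Rightarrow> 'b" and \<iota> :: "'a \<Rightarrow> 'b"
    and j :: "'b \<Rightarrow> 'm" and u :: "'g \<Rightarrow> 'm"
  assumes ore: "ore_enveloping G P"
    and A: "cstar_algebra scA stA" and unitA: "\<forall>x. oneA * x = x \<and> x * oneA = x"
    and B: "cstar_algebra scB stB"
    and alpha_hom: "\<forall>p\<in>P. star_hom scA stA scA stA (\<alpha> p) \<and> inj (\<alpha> p)"
    and alpha_id: "\<alpha> \<one>\<^bsub>G\<^esub> = id"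
    and alpha_mult: "\<forall>p\<in>P. \<forall>q\<in>P. \<alpha> (p \<otimes>\<^bsub>G\<^esub> q) = \<alpha> p \<circ> \<alpha> q"
    and beta_aut: "\<forall>g\<in>carrier G. star_aut scB stB (\<beta> g)"
    and beta_id: "\<beta> \<one>\<^bsub>G\<^esub> = id"
    and beta_mult: "\<forall>g\<in>carrier G. \<forall>h\<in>carrier G. \<beta> (g \<otimes>\<^bsub>G\<^esub> h) = \<beta> g \<circ> \<beta> h"
    and iota_hom: "star_hom scA stA scB stB \<iota>" and iota_inj: "inj \<iota>"
    and dilation: "\<forall>p\<in>P. \<beta> p \<circ> \<iota> = \<iota> \<circ> \<alpha> p"
    and minimal: "closure (\<Union>p\<in>P. \<beta> (inv\<^bsub>G\<^esub> p) ` range \<iota>) = UNIV"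
    and M: "cstar_algebra scM stM" and unitM: "\<forall>x. oneM * x = x \<and> x * oneM = x"
    and j_hom: "star_hom scB stB scM stM j" and j_inj: "inj j"
    and u_unitary: "\<forall>g\<in>carrier G. stM (u g) * u g = oneM \<and> u g * stM (u g) = oneM"
    and u_mult: "\<forall>g\<in>carrier G. \<forall>h\<in>carrier G. u (g \<otimes>\<^bsub>G\<^esub> h) = u g * u h"
    and covariant: "\<forall>g\<in>carrier G. \<forall>b. u g * j b * stM (u g) = j (\<beta> g b)"
  shows "(\<forall>p\<in>P. stM (u p) * j (\<iota> oneA) * u p \<in> range j) \<and>
         approximate_unit stB P (ore_net G P) (\<lambda>p. the_inv j (stM (u p) * j (\<iota> oneA) * u p))"
proof -
  have grp: "group G" using ore unfolding ore_enveloping_def by blast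
  have PG: "P \<subseteq> carrier G" and oneP: "\<one>\<^bsub>G\<^esub> \<in> P"
    using ore unfolding ore_enveloping_def by blast+
  have Pmult: "\<forall>p\<in>P. \<forall>q\<in>P. p \<otimes>\<^bsub>G\<^esub> q \<in> P"
    using ore unfolding ore_enveloping_def by blast
  have stst: "\<And>x. stM (stM x) = x" using M unfolding cstar_algebra_def by blast
  have one_c: "\<one>\<^bsub>G\<^esub> \<in> carrier G" using grp by (simp add: group.is_monoid monoid.one_closed)
  have u1: "u \<one>\<^bsub>G\<^esub> = oneM"
  proof -
    have a: "u \<one>\<^bsub>G\<^esub> = u \<one>\<^bsub>G\<^esub> * u \<one>\<^bsub>G\<^esub>"
      using u_mult one_c grp by (metis group.is_monoid monoid.l_one)
    have "oneM = stM (u \<one>\<^bsub>G\<^esub>) * u \<one>\<^bsub>G\<^esub>" using u_unitary one_c by simp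
    also have "\<dots> = stM (u \<one>\<^bsub>G\<^esub>) * (u \<one>\<^bsub>G\<^esub> * u \<one>\<^bsub>G\<^esub>)" using a by simp
    also have "\<dots> = (stM (u \<one>\<^bsub>G\<^esub>) * u \<one>\<^bsub>G\<^esub>) * u \<one>\<^bsub>G\<^esub>" by (simp add: mult.assoc)
    also have "\<dots> = u \<one>\<^bsub>G\<^esub>" using u_unitary one_c unitM by simp
    finally show ?thesis by simp
  qed
  have uinv: "u (inv\<^bsub>G\<^esub> g) = stM (u g)" if g: "g \<in> carrier G" for g
  proof -
    have ic: "inv\<^bsub>G\<^esub> g \<in> carrier G" using grp g by (simp add: group.inv_closed)
    have a: "u (inv\<^bsub>G\<^esub> g) * u g = oneM"
      using u_mult ic g u1 grp by (metis group.l_inv)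
    have "u (inv\<^bsub>G\<^esub> g) = u (inv\<^bsub>G\<^esub> g) * (u g * stM (u g))" using u_unitary g unitM by simp
    also have "\<dots> = (u (inv\<^bsub>G\<^esub> g) * u g) * stM (u g)" by (simp add: mult.assoc)
    also have "\<dots> = stM (u g)" using a unitM by simp
    finally show ?thesis .
  qed
  have key: "stM (u p) * j b * u p = j (\<beta> (inv\<^bsub>G\<^esub> p) b)" if p: "p \<in> P" for p b
  proof -
    have pc: "p \<in> carrier G" using p PG by blast
    have ic: "inv\<^bsub>G\<^esub> p \<in> carrier G" using grp pc by (simp add: group.inv_closed)
    have "j (\<beta> (inv\<^bsub>G\<^esub> p) b) = u (inv\<^bsub>G\<^esub> p) * j b * stM (u (inv\<^bsub>G\<^esub> p))"
      using covariant ic by simp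
    also have "\<dots> = stM (u p) * j b * u p" using uinv[OF pc] stst by simp
    finally show ?thesis by simp
  qed
  define e where "e p = \<beta> (inv\<^bsub>G\<^esub> p) (\<iota> oneA)" for p
  have the_e: "the_inv j (stM (u p) * j (\<iota> oneA) * u p) = e p" if "p \<in> P" for p
    using key[OF that] j_inj by (simp add: e_def the_inv_f_f)
  have bhom: "star_hom scB stB scB stB (\<beta> g)" if "g \<in> carrier G" for g
    using beta_aut that unfolding star_aut_def by blast
  have bmul: "\<beta> g (x * y) = \<beta> g x * \<beta> g y" if "g \<in> carrier G" for g x y
    using bhom[OF that] unfolding star_hom_def by blast
  have bst: "\<beta> g (stB x) = stB (\<beta> g x)" if "g \<in> carrier G" for g x
    using bhom[OF that] unfolding star_hom_def by blast
  have imul: "\<iota> (x * y) = \<iota> x * \<iota> y" for x y using iota_hom unfolding star_hom_def by blast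
  have ist: "\<iota> (stA x) = stB (\<iota> x)" for x using iota_hom unfolding star_hom_def by blast
  have stAone: "stA oneA = oneA"
  proof -
    have ss: "stA (stA x) = x" for x using A unfolding cstar_algebra_def by blast
    have m: "stA (oneA * stA oneA) = stA (stA oneA) * stA oneA"
      using A unfolding cstar_algebra_def by blast
    have "oneA * stA oneA = stA oneA" using unitA by simp
    then have "stA (stA oneA) = oneA * stA oneA" using m ss unitA by metis
    then show ?thesis using ss unitA by metis
  qed
  have proj: "e p = stB (e p) * e p" if p: "p \<in> P" for p
  proof -
    have ic: "inv\<^bsub>G\<^esub> p \<in> carrier G" using grp p PG by (auto intro: group.inv_closed)
    have "\<iota> oneA = \<iota> (stA oneA * oneA)" using stAone unitA by simp
    also have "\<dots> = stB (\<iota> oneA) * \<iota> oneA" using imul ist by simp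
    finally show ?thesis unfolding e_def using bmul[OF ic] bst[OF ic] by metis
  qed
  have nrm: "norm (e p) \<le> 1" if p: "p \<in> P" for p
  proof -
    have "norm (stB (e p) * e p) = norm (e p) ^ 2" using B unfolding cstar_algebra_def by blast
    then have "norm (e p) = norm (e p) ^ 2" using proj[OF p] by simp
    then have "norm (e p) * (norm (e p) - 1) = 0" by (simp add: power2_eq_square algebra_simps)
    then show ?thesis by auto
  qed
  have bcomp: "\<beta> g (\<beta> h x) = \<beta> (g \<otimes>\<^bsub>G\<^esub> h) x" if "g \<in> carrier G" "h \<in> carrier G" for g h x
    using beta_mult that by simp
  have eqs: "e q * \<beta> (inv\<^bsub>G\<^esub> p) (\<iota> a) = \<beta> (inv\<^bsub>G\<^esub> p) (\<iota> a) \<and>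
             \<beta> (inv\<^bsub>G\<^esub> p) (\<iota> a) * e q = \<beta> (inv\<^bsub>G\<^esub> p) (\<iota> a)"
    if p: "p \<in> P" and s: "s \<in> P" and q: "q = s \<otimes>\<^bsub>G\<^esub> p" for p s q a
  proof -
    have pc: "p \<in> carrier G" and sc: "s \<in> carrier G" using p s PG by auto
    have ipc: "inv\<^bsub>G\<^esub> p \<in> carrier G" and isc: "inv\<^bsub>G\<^esub> s \<in> carrier G"
      using grp pc sc by (auto intro: group.inv_closed)
    have iq: "inv\<^bsub>G\<^esub> q = inv\<^bsub>G\<^esub> p \<otimes>\<^bsub>G\<^esub> inv\<^bsub>G\<^esub> s"
      using q grp pc sc by (simp add: group.inv_mult_group)
    have eq: "e q = \<beta> (inv\<^bsub>G\<^esub> p) (\<beta> (inv\<^bsub>G\<^esub> s) (\<iota> oneA))"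
      unfolding e_def iq using bcomp[OF ipc isc] by simp
    have ia: "\<iota> a = \<beta> (inv\<^bsub>G\<^esub> s) (\<iota> (\<alpha> s a))"
    proof -
      have "\<iota> (\<alpha> s a) = \<beta> s (\<iota> a)" using dilation s by (metis comp_apply)
      then have "\<beta> (inv\<^bsub>G\<^esub> s) (\<iota> (\<alpha> s a)) = \<beta> (inv\<^bsub>G\<^esub> s \<otimes>\<^bsub>G\<^esub> s) (\<iota> a)"
        using bcomp[OF isc sc] by simp
      also have "\<dots> = \<iota> a" using grp sc beta_id by (simp add: group.l_inv)
      finally show ?thesis by simp
    qed
    have l: "\<beta> (inv\<^bsub>G\<^esub> s) (\<iota> oneA) * \<iota> a = \<iota> a"
      by (metis ia bmul[OF isc] imul unitA)
    have r: "\<iota> a * \<beta> (inv\<^bsub>G\<^esub> s) (\<iota> oneA) = \<iota> a"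
      by (metis ia bmul[OF isc] imul unitA)
    show ?thesis unfolding eq using l r bmul[OF ipc] by metis
  qed
  let ?S = "\<Union>p\<in>P. \<beta> (inv\<^bsub>G\<^esub> p) ` range \<iota>"
  have evP: "eventually (\<lambda>i. i \<in> P) (ore_net G P)"
    unfolding ore_net_def
    by (rule eventually_INF1[OF oneP]) (auto simp: eventually_principal)
  have evl: "\<forall>x\<in>?S. eventually (\<lambda>i. e i * x = x) (ore_net G P)"
   and evr: "\<forall>x\<in>?S. eventually (\<lambda>i. x * e i = x) (ore_net G P)"
  proof -
    have H: "eventually (\<lambda>i. e i * x = x \<and> x * e i = x) (ore_net G P)" if "x \<in> ?S" for x
    proof -
      obtain p a where p: "p \<in> P" and x: "x = \<beta> (inv\<^bsub>G\<^esub> p) (\<iota> a)" using \<open>x \<in> ?S\<close> by blast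
      show ?thesis
        unfolding ore_net_def
        by (rule eventually_INF1[OF p]) (auto simp: eventually_principal x dest: eqs[OF p])
    qed
    show "\<forall>x\<in>?S. eventually (\<lambda>i. e i * x = x) (ore_net G P)"
      using H by (blast intro: eventually_mono)
    show "\<forall>x\<in>?S. eventually (\<lambda>i. x * e i = x) (ore_net G P)"
      using H by (blast intro: eventually_mono)
  qed
  have au: "approximate_unit stB P (ore_net G P) e"
    unfolding approximate_unit_def
  proof (intro conjI ballI allI)
    fix i assume "i \<in> P" then show "\<exists>y. e i = stB y * y" using proj by blast
  next
    fix i assume "i \<in> P" then show "norm (e i) \<le> 1" using nrm by blast
  next
    fix b show "((\<lambda>i. e i * b) \<longlongrightarrow> b) (ore_net G P)"
      using approx_left[of P e, OF _ evP minimal evl] nrm by blast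
  next
    fix b show "((\<lambda>i. b * e i) \<longlongrightarrow> b) (ore_net G P)"
      using approx_right[of P e, OF _ evP minimal evr] nrm by blast
  qed
  have "approximate_unit stB P (ore_net G P) (\<lambda>p. the_inv j (stM (u p) * j (\<iota> oneA) * u p))"
  proof -
    let ?f = "\<lambda>p. the_inv j (stM (u p) * j (\<iota> oneA) * u p)"
    have evq: "eventually (\<lambda>i. ?f i = e i) (ore_net G P)"
      using evP the_e by (auto elim: eventually_mono)
    have c1: "((\<lambda>i. ?f i * b) \<longlongrightarrow> b) (ore_net G P)" for b
    proof -
      have "eventually (\<lambda>i. e i * b = ?f i * b) (ore_net G P)" using evq by (auto elim: eventually_mono)
      then show ?thesis using au tendsto_cong unfolding approximate_unit_def by fast
    qed
    have c2: "((\<lambda>i. b * ?f i) \<longlongrightarrow> b) (ore_net G P)" for b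
    proof -
      have "eventually (\<lambda>i. b * e i = b * ?f i) (ore_net G P)" using evq by (auto elim: eventually_mono)
      then show ?thesis using au tendsto_cong unfolding approximate_unit_def by fast
    qed
    show ?thesis using au the_e c1 c2 unfolding approximate_unit_def by simp
  qed
  moreover have "\<forall>p\<in>P. stM (u p) * j (\<iota> oneA) * u p \<in> range j" using key by simp
  ultimately show ?thesis by blast
qed

end
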